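(* Let $M$ be an $n\times n$ complex Hadamard matrix, let $\Gamma$ be the group of all $n\times n$ complex monomial matrices $P$ with $PMP^\ast=M$, let $\pi\colon\Gamma\to\mathrm{Sym}_n$ send a monomial matrix to its underlying permutation, let $G=\pi(\Gamma)$, assume $G$ is transitive, and let $\Gamma_{\rm f}=\{L\in\Gamma:\det(L)=1\}$. Suppose that $G$ and $\Gamma_{\rm f}$ are perfect. Let $\hat{G}$ be a Schur cover of $G$, let $H\leq G$ be a point stabiliser, and let $\hat{H}\leq\hat{G}$ be the full preimage of $H$ under the projection $\hat{G}\to G$. Then $\Gamma_{\rm f}=\rho(\hat{G})$ for some representation $\rho$ of $\hat{G}$ induced from a linear character of $\hat{H}$. *)

theory Defs
  imports "HOL-Analysis.Analysis" "HOL-Algebra.Solvable_Groups" "HOL-Algebra.Bij"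
begin

definition cnj_transpose :: "complex^'n^'n \<Rightarrow> complex^'n^'n" where
  "cnj_transpose P = (\<chi> i j. cnj (P $ j $ i))"

definition complex_hadamard :: "complex^'n::finite^'n \<Rightarrow> bool" where
  "complex_hadamard M \<longleftrightarrow> (\<forall>i j. norm (M $ i $ j) = 1)
     \<and> M ** cnj_transpose M = of_nat CARD('n) *\<^sub>R mat 1"

definition monomial_mat :: "complex^'n^'n \<Rightarrow> bool" where
  "monomial_mat P \<longleftrightarrow> (\<forall>i. \<exists>!j. P $ i $ j \<noteq> 0) \<and> (\<forall>j. \<exists>!i. P $ i $ j \<noteq> 0)"

text \<open>Underlying permutation of a monomial matrix: P e_j is a multiple of e_(sigma j).
  With this convention the map is a homomorphism with respect to composition.\<close>
definition monomial_perm :: "complex^'n^'n \<Rightarrow> 'n \<Rightarrow> 'n" where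
  "monomial_perm P = (\<lambda>j. THE i. P $ i $ j \<noteq> 0)"

definition mono_aut :: "complex^'n^'n \<Rightarrow> (complex^'n^'n) set" where
  "mono_aut M = {P. monomial_mat P \<and> P ** M ** cnj_transpose P = M}"

definition mono_aut_f :: "complex^'n::finite^'n \<Rightarrow> (complex^'n^'n) set" where
  "mono_aut_f M = {L \<in> mono_aut M. det L = 1}"

definition mat_group :: "(complex^'n::finite^'n) set \<Rightarrow> (complex^'n^'n) monoid" where
  "mat_group S = \<lparr>carrier = S, mult = (**), one = mat 1\<rparr>"

definition perm_group :: "('n \<Rightarrow> 'n) set \<Rightarrow> ('n \<Rightarrow> 'n) monoid" where
  "perm_group G = (BijGroup (UNIV :: 'n set)) \<lparr>carrier := G\<rparr>"

definition transitive_perms :: "('n \<Rightarrow> 'n) set \<Rightarrow> bool" where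
  "transitive_perms G \<longleftrightarrow> (\<forall>i j. \<exists>\<sigma>\<in>G. \<sigma> i = j)"

definition perfect_group :: "('a, 'b) monoid_scheme \<Rightarrow> bool" where
  "perfect_group G \<longleftrightarrow> derived G (carrier G) = carrier G"

definition group_center :: "('a, 'b) monoid_scheme \<Rightarrow> 'a set" where
  "group_center G = {z \<in> carrier G. \<forall>g \<in> carrier G. z \<otimes>\<^bsub>G\<^esub> g = g \<otimes>\<^bsub>G\<^esub> z}"

definition stem_extension ::
  "('e, 'c) monoid_scheme \<Rightarrow> ('e \<Rightarrow> 'a) \<Rightarrow> ('a, 'b) monoid_scheme \<Rightarrow> bool" where
  "stem_extension E \<phi> G \<longleftrightarrow> group E \<and> group G \<and> \<phi> \<in> hom E G
     \<and> \<phi> ` carrier E = carrier G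
     \<and> kernel E G \<phi> \<subseteq> group_center E \<inter> derived E (carrier E)"

text \<open>All stem extensions of a finite group are finite, hence can be realised with carrier
  in the countable type nat; so comparing with those is comparing with all of them.\<close>
definition schur_cover ::
  "('e, 'c) monoid_scheme \<Rightarrow> ('e \<Rightarrow> 'a) \<Rightarrow> ('a, 'b) monoid_scheme \<Rightarrow> bool" where
  "schur_cover E \<phi> G \<longleftrightarrow> stem_extension E \<phi> G \<and> finite (carrier E)
     \<and> (\<forall>(K :: nat monoid) \<psi>. stem_extension K \<psi> G \<longrightarrow> card (carrier K) \<le> card (carrier E))"

definition linear_character :: "('e, 'c) monoid_scheme \<Rightarrow> 'e set \<Rightarrow> ('e \<Rightarrow> complex) \<Rightarrow> bool" where 
  "linear_character E H chr \<longleftrightarrow> (\<forall>h\<in>H. chr h \<noteq> 0)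
     \<and> (\<forall>h\<in>H. \<forall>k\<in>H. chr (h \<otimes>\<^bsub>E\<^esub> k) = chr h * chr k)"

text \<open>t is a left transversal of H in E indexed by 'n (so [E:H] = CARD('n)).\<close>
definition left_transversal :: "('e, 'c) monoid_scheme \<Rightarrow> 'e set \<Rightarrow> ('n \<Rightarrow> 'e) \<Rightarrow> bool" where
  "left_transversal E H t \<longleftrightarrow> (\<forall>j. t j \<in> carrier E)
     \<and> (\<forall>g\<in>carrier E. \<exists>!j. inv\<^bsub>E\<^esub> (t j) \<otimes>\<^bsub>E\<^esub> g \<in> H)"

text \<open>Matrix of the induced representation Ind_H^E lambda with respect to the basis
  t_j \<otimes> 1 (t a left transversal): entry (j,k) is lambda(t_j^-1 g t_k) if this lies in H
  and 0 otherwise.\<close>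
definition induced_mat ::
  "('e, 'c) monoid_scheme \<Rightarrow> 'e set \<Rightarrow> ('e \<Rightarrow> complex) \<Rightarrow> ('n \<Rightarrow> 'e) \<Rightarrow> 'e \<Rightarrow> complex^'n^'n" where
  "induced_mat E H chr t g = (\<chi> j k. let x = inv\<^bsub>E\<^esub> (t j) \<otimes>\<^bsub>E\<^esub> g \<otimes>\<^bsub>E\<^esub> t k in
       if x \<in> H then chr x else 0)"

definition induced_from_linear_char ::
  "('e, 'c) monoid_scheme \<Rightarrow> 'e set \<Rightarrow> ('e \<Rightarrow> complex^'n::finite^'n) \<Rightarrow> bool" where
  "induced_from_linear_char E H \<rho> \<longleftrightarrow>
     (\<forall>g\<in>carrier E. invertible (\<rho> g))
     \<and> (\<forall>g\<in>carrier E. \<forall>h\<in>carrier E. \<rho> (g \<otimes>\<^bsub>E\<^esub> h) = \<rho> g ** \<rho> h)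
     \<and> (\<exists>chr t (S :: complex^'n^'n). linear_character E H chr \<and> left_transversal E H t \<and> invertible S
          \<and> (\<forall>g\<in>carrier E. \<rho> g ** S = S ** induced_mat E H chr t g))"

end

theory Submission
  imports Defs
begin

lemma ct_entry [simp]: "cnj_transpose P $ i $ j = cnj (P $ j $ i)"
  by (simp add: cnj_transpose_def)

lemma ct_ct [simp]: "cnj_transpose (cnj_transpose P) = P"
  by (simp add: vec_eq_iff)

lemma ct_mult: "cnj_transpose (A ** B) = cnj_transpose B ** cnj_transpose (A :: complex^'n::finite^'n)"
  by (simp add: vec_eq_iff matrix_matrix_mult_def mult.commute)

lemma ct_mat [simp]: "cnj_transpose (mat c :: complex^'n::finite^'n) = mat (cnj c)"
  by (simp add: vec_eq_iff mat_def)

lemma mult_col: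
  assumes "\<And>l. Q $ l $ b \<noteq> 0 \<Longrightarrow> l = c"
  shows "((P::complex^'n::finite^'n) ** Q) $ a $ b = P $ a $ c * Q $ c $ b"
proof -
  have "(P ** Q) $ a $ b = (\<Sum>l\<in>UNIV. P $ a $ l * Q $ l $ b)"
    by (simp add: matrix_matrix_mult_def)
  also have "\<dots> = (\<Sum>l\<in>UNIV. if l = c then P $ a $ l * Q $ l $ b else 0)"
    using assms by (intro sum.cong) auto
  finally show ?thesis by simp
qed

lemma mult_row:
  assumes "\<And>l. P $ a $ l \<noteq> 0 \<Longrightarrow> l = c"
  shows "((P::complex^'n::finite^'n) ** Q) $ a $ b = P $ a $ c * Q $ c $ b"
proof -
  have "(P ** Q) $ a $ b = (\<Sum>l\<in>UNIV. P $ a $ l * Q $ l $ b)"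
    by (simp add: matrix_matrix_mult_def)
  also have "\<dots> = (\<Sum>l\<in>UNIV. if l = c then P $ a $ l * Q $ l $ b else 0)"
    using assms by (intro sum.cong) auto
  finally show ?thesis by simp
qed

lemma mat_mult_left: "(mat c ** A :: complex^'n::finite^'n) = (\<chi> i j. c * A $ i $ j)"
proof -
  have "(mat c ** A) $ i $ j = c * A $ i $ j" for i j
    by (subst mult_row[where c=i]) (auto simp: mat_def split: if_splits)
  then show ?thesis by (simp add: vec_eq_iff)
qed

lemma mat_mult_right: "(A ** mat c :: complex^'n::finite^'n) = (\<chi> i j. A $ i $ j * c)"
proof -
  have "(A ** mat c) $ i $ j = A $ i $ j * c" for i j
    by (subst mult_col[where c=j]) (auto simp: mat_def split: if_splits)
  then show ?thesis by (simp add: vec_eq_iff)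
qed

lemma mat_comm: "(mat c ** A :: complex^'n::finite^'n) = A ** mat c"
  by (simp add: mat_mult_left mat_mult_right mult.commute)

lemma mono_row: "monomial_mat P \<Longrightarrow> P $ a $ c \<noteq> 0 \<Longrightarrow> P $ a $ l \<noteq> 0 \<Longrightarrow> l = c"
  unfolding monomial_mat_def by metis

lemma mono_col: "monomial_mat P \<Longrightarrow> P $ c $ b \<noteq> 0 \<Longrightarrow> P $ l $ b \<noteq> 0 \<Longrightarrow> l = c"
  unfolding monomial_mat_def by metis

lemma mono_row_ex: "monomial_mat P \<Longrightarrow> \<exists>c. P $ a $ c \<noteq> 0"
  unfolding monomial_mat_def by metis

lemma monomial_perm_iff:
  assumes "monomial_mat P"
  shows "P $ a $ b \<noteq> 0 \<longleftrightarrow> a = monomial_perm P b"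
proof -
  from assms have u: "\<exists>!a. P $ a $ b \<noteq> 0" by (auto simp: monomial_mat_def)
  then have "P $ (THE a. P $ a $ b \<noteq> 0) $ b \<noteq> 0" by (rule theI')
  with u show ?thesis unfolding monomial_perm_def by blast
qed

lemma monomial_perm_bij:
  assumes "monomial_mat P"
  shows "bij (monomial_perm P)"
proof (rule bijI)
  show "inj (monomial_perm P)"
  proof (rule injI)
    fix x y assume "monomial_perm P x = monomial_perm P y"
    then have "P $ monomial_perm P x $ x \<noteq> 0" "P $ monomial_perm P x $ y \<noteq> 0"
      using monomial_perm_iff[OF assms] by metis+
    then show "x = y" using mono_row[OF assms] by metis
  qed
  show "surj (monomial_perm P)"
  proof -
    { fix a obtain c where "P $ a $ c \<noteq> 0" using mono_row_ex[OF assms] by blast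
      then have "a \<in> range (monomial_perm P)" using monomial_perm_iff[OF assms] by blast }
    then show ?thesis by blast
  qed
qed

lemma monomial_by_perm:
  assumes "bij \<tau>" and "\<And>a b. E $ a $ b \<noteq> 0 \<longleftrightarrow> a = \<tau> b"
  shows "monomial_mat E" and "monomial_perm E = \<tau>"
proof -
  show "monomial_mat E" unfolding monomial_mat_def
  proof (intro conjI allI)
    fix a show "\<exists>!b. E $ a $ b \<noteq> 0"
      using assms by (metis bij_pointE)
  next
    fix b show "\<exists>!a. E $ a $ b \<noteq> 0" using assms by metis
  qed
  then show "monomial_perm E = \<tau>"
    using monomial_perm_iff assms(2) by (metis ext)
qed

lemma monomial_ct:
  assumes "monomial_mat P" shows "monomial_mat (cnj_transpose P)"
  using assms unfolding monomial_mat_def by simp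

lemma monomial_mult:
  assumes P: "monomial_mat P" and Q: "monomial_mat Q"
  shows "monomial_mat (P ** Q)" "monomial_perm (P ** Q) = monomial_perm P \<circ> monomial_perm Q"
proof -
  have e: "(P ** Q) $ a $ b = P $ a $ monomial_perm Q b * Q $ monomial_perm Q b $ b" for a b
    by (rule mult_col) (use monomial_perm_iff[OF Q] in blast)
  have "(P ** Q) $ a $ b \<noteq> 0 \<longleftrightarrow> a = (monomial_perm P \<circ> monomial_perm Q) b" for a b
    unfolding e using monomial_perm_iff[OF P] monomial_perm_iff[OF Q] by auto
  moreover have "bij (monomial_perm P \<circ> monomial_perm Q)"
    using monomial_perm_bij[OF P] monomial_perm_bij[OF Q] by (rule bij_comp[rotated])
  ultimately show "monomial_mat (P ** Q)" "monomial_perm (P ** Q) = monomial_perm P \<circ> monomial_perm Q"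
    using monomial_by_perm by blast+
qed

lemma monomial_mat1: "monomial_mat (mat 1 :: complex^'n::finite^'n)"
  "monomial_perm (mat 1 :: complex^'n::finite^'n) = id"
  using monomial_by_perm[of id "mat 1 :: complex^'n::finite^'n"] by (auto simp: mat_def split: if_splits)

lemma det_cnj: "det (cnj_transpose A) = cnj (det (A :: complex^'n::finite^'n))"
proof -
  have "cnj_transpose A = transpose (\<chi> i j. cnj (A $ i $ j))"
    by (simp add: vec_eq_iff transpose_def)
  then have "det (cnj_transpose A) = det (\<chi> i j. cnj (A $ i $ j))" by simp
  also have "\<dots> = cnj (det A)" unfolding det_def by simp
  finally show ?thesis .
qed

lemma aut_entry:
  assumes P: "monomial_mat P" and ac: "P $ a $ c \<noteq> 0" and bd: "P $ b $ d \<noteq> 0"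
  shows "(P ** M ** cnj_transpose P) $ a $ b = P $ a $ c * M $ c $ d * cnj (P $ b $ d)"
proof -
  have "(P ** M ** cnj_transpose P) $ a $ b = (P ** M) $ a $ d * cnj (P $ b $ d)"
    by (subst mult_col[where c=d]) (use mono_row[OF P bd] in auto)
  also have "(P ** M) $ a $ d = P $ a $ c * M $ c $ d"
    by (rule mult_row) (use mono_row[OF P ac] in auto)
  finally show ?thesis .
qed

lemma aut_unit:
  assumes H: "complex_hadamard M" and P: "P \<in> mono_aut M" and ac: "P $ a $ c \<noteq> 0"
  shows "P $ a $ c * cnj (P $ a $ c) = 1"
proof -
  have m: "monomial_mat P" "P ** M ** cnj_transpose P = M" using P by (auto simp: mono_aut_def)
  have "M $ a $ a = P $ a $ c * M $ c $ c * cnj (P $ a $ c)"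
    using aut_entry[OF m(1) ac ac, of M] m(2) by simp
  then have "norm (M $ a $ a) = norm (P $ a $ c * cnj (P $ a $ c)) * norm (M $ c $ c)"
    by (simp add: norm_mult)
  then have n1: "norm (P $ a $ c * cnj (P $ a $ c)) = 1" using H by (simp add: complex_hadamard_def)
  have "norm (P $ a $ c * cnj (P $ a $ c)) = (norm (P $ a $ c))\<^sup>2"
    by (simp add: norm_mult power2_eq_square)
  with n1 have "(norm (P $ a $ c))\<^sup>2 = 1" by simp
  then show ?thesis using complex_norm_square[of "P $ a $ c"] by simp
qed

lemma aut_unitary:
  assumes H: "complex_hadamard M" and P: "P \<in> mono_aut M"
  shows "P ** cnj_transpose P = mat 1" "cnj_transpose P ** P = mat 1"
proof -
  have m: "monomial_mat P" using P by (auto simp: mono_aut_def)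
  have "(P ** cnj_transpose P) $ a $ b = mat 1 $ a $ b" for a b
  proof -
    obtain c where ac: "P $ a $ c \<noteq> 0" using mono_row_ex[OF m] by blast
    have "(P ** cnj_transpose P) $ a $ b = P $ a $ c * cnj (P $ b $ c)"
      by (subst mult_row[where c=c]) (use mono_row[OF m ac] in auto)
    also have "\<dots> = mat 1 $ a $ b"
      using aut_unit[OF H P ac] mono_col[OF m ac] by (auto simp: mat_def)
    finally show ?thesis .
  qed
  then show "P ** cnj_transpose P = mat 1" by (simp add: vec_eq_iff)
  then show "cnj_transpose P ** P = mat 1" by (simp add: matrix_left_right_inverse)
qed

lemma aut_mult:
  assumes "P \<in> mono_aut M" "Q \<in> mono_aut M" shows "P ** Q \<in> mono_aut M"
proof -
  have "P ** Q ** M ** cnj_transpose (P ** Q) = P ** (Q ** M ** cnj_transpose Q) ** cnj_transpose P"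
    by (simp add: ct_mult matrix_mul_assoc)
  also have "\<dots> = M" using assms by (simp add: mono_aut_def)
  finally show ?thesis using assms monomial_mult by (auto simp: mono_aut_def)
qed

lemma aut_inv:
  assumes H: "complex_hadamard M" and P: "P \<in> mono_aut M" shows "cnj_transpose P \<in> mono_aut M"
proof -
  have e: "P ** M ** cnj_transpose P = M" using P by (simp add: mono_aut_def)
  have "cnj_transpose P ** M ** cnj_transpose (cnj_transpose P)
      = cnj_transpose P ** (P ** M ** cnj_transpose P) ** P"
    by (simp add: e)
  also have "\<dots> = (cnj_transpose P ** P) ** M ** (cnj_transpose P ** P)"
    by (simp add: matrix_mul_assoc)
  also have "\<dots> = M" using aut_unitary[OF H P] by simp
  finally show ?thesis using P monomial_ct by (auto simp: mono_aut_def)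
qed

lemma aut_one: "mat 1 \<in> mono_aut M"
  using monomial_mat1 by (simp add: mono_aut_def)

lemma aut_det:
  assumes H: "complex_hadamard M" and P: "P \<in> mono_aut M"
  shows "det P * cnj (det P) = 1"
  using arg_cong[OF aut_unitary(1)[OF H P], of det] by (simp add: det_mul det_cnj)

lemma autf_mult: "P \<in> mono_aut_f M \<Longrightarrow> Q \<in> mono_aut_f M \<Longrightarrow> P ** Q \<in> mono_aut_f M"
  by (simp add: mono_aut_f_def aut_mult det_mul)

lemma autf_inv: "complex_hadamard M \<Longrightarrow> P \<in> mono_aut_f M \<Longrightarrow> cnj_transpose P \<in> mono_aut_f M"
  by (simp add: mono_aut_f_def aut_inv det_cnj)

lemma autf_one: "mat 1 \<in> mono_aut_f M"
  by (simp add: mono_aut_f_def aut_one)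

lemma group_matf:
  assumes H: "complex_hadamard M" shows "group (mat_group (mono_aut_f M))"
proof (rule groupI)
  fix x assume x: "x \<in> carrier (mat_group (mono_aut_f M))"
  then have "cnj_transpose x \<in> mono_aut_f M" "cnj_transpose x ** x = mat 1"
    using autf_inv[OF H] aut_unitary(2)[OF H] by (auto simp: mat_group_def mono_aut_f_def)
  then show "\<exists>y\<in>carrier (mat_group (mono_aut_f M)). y \<otimes>\<^bsub>mat_group (mono_aut_f M)\<^esub> x = \<one>\<^bsub>mat_group (mono_aut_f M)\<^esub>"
    by (auto simp: mat_group_def)
qed (simp_all add: mat_group_def autf_mult autf_one matrix_mul_assoc)

lemma matf_inv:
  assumes H: "complex_hadamard M" and P: "P \<in> mono_aut_f M"
  shows "inv\<^bsub>mat_group (mono_aut_f M)\<^esub> P = cnj_transpose P"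
proof -
  have "cnj_transpose P ** P = mat 1" using P aut_unitary(2)[OF H] by (simp add: mono_aut_f_def)
  then show ?thesis
    by (intro group.inv_equality[OF group_matf[OF H]]) (simp_all add: mat_group_def P autf_inv[OF H P])
qed

lemma aut_kernel:
  assumes H: "complex_hadamard M" and P: "P \<in> mono_aut M" and id: "monomial_perm P = id"
  shows "P = mat (P $ i $ i)"
proof -
  have m: "monomial_mat P" "P ** M ** cnj_transpose P = M" using P by (auto simp: mono_aut_def)
  have nz: "P $ a $ b \<noteq> 0 \<longleftrightarrow> a = b" for a b using monomial_perm_iff[OF m(1)] id by simp
  have eq: "P $ a $ a * cnj (P $ b $ b) = 1" for a b
  proof -
    have "M $ a $ b = P $ a $ a * M $ a $ b * cnj (P $ b $ b)"
      using aut_entry[OF m(1), of a a b b M] nz m(2) by simp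
    moreover have "norm (M $ a $ b) = 1" using H by (auto simp: complex_hadamard_def)
    then have "M $ a $ b \<noteq> 0" by auto
    ultimately have "M $ a $ b * (P $ a $ a * cnj (P $ b $ b)) = M $ a $ b * 1"
      "M $ a $ b \<noteq> 0" by (simp_all add: mult_ac)
    then show ?thesis by auto
  qed
  have "P $ a $ a = P $ i $ i" for a
  proof -
    have "P $ a $ a * cnj (P $ i $ i) = P $ i $ i * cnj (P $ i $ i)" using eq by simp
    moreover have "cnj (P $ i $ i) \<noteq> 0" using nz by simp
    ultimately show ?thesis by simp
  qed
  then show ?thesis using nz by (auto simp: vec_eq_iff mat_def)
qed

lemma Bij_UNIV: "f \<in> Bij UNIV \<longleftrightarrow> bij f"
  by (simp add: Bij_def)

lemma pg_carrier [simp]: "carrier (perm_group G) = G"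
  by (simp add: perm_group_def)

lemma pg_mult: "f \<in> Bij UNIV \<Longrightarrow> g \<in> Bij UNIV \<Longrightarrow> f \<otimes>\<^bsub>perm_group G\<^esub> g = f \<circ> g"
  by (simp add: perm_group_def BijGroup_def compose_def fun_eq_iff)

lemma pg_one: "\<one>\<^bsub>perm_group G\<^esub> = id"
  by (simp add: perm_group_def BijGroup_def fun_eq_iff)

lemma mg_carrier [simp]: "carrier (mat_group S) = S"
  and mg_mult [simp]: "x \<otimes>\<^bsub>mat_group S\<^esub> y = x ** y"
  and mg_one [simp]: "\<one>\<^bsub>mat_group S\<^esub> = mat 1"
  by (simp_all add: mat_group_def)

lemma aut_perm_bij: "P \<in> mono_aut M \<Longrightarrow> monomial_perm P \<in> Bij UNIV"
  using monomial_perm_bij by (auto simp: Bij_UNIV mono_aut_def)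

lemma det_mat: "det (mat c :: complex^'n::finite^'n) = c ^ CARD('n)"
  by (subst det_diagonal) (simp_all add: mat_def)

lemma perm_hom:
  "monomial_perm \<in> hom (mat_group (mono_aut_f M)) (perm_group (monomial_perm ` mono_aut M))"
proof (rule homI)
  fix P assume "P \<in> carrier (mat_group (mono_aut_f M))"
  then show "monomial_perm P \<in> carrier (perm_group (monomial_perm ` mono_aut M))"
    by (auto simp: mono_aut_f_def)
next
  fix P Q assume P: "P \<in> carrier (mat_group (mono_aut_f M))" and Q: "Q \<in> carrier (mat_group (mono_aut_f M))"
  then have PQ: "P \<in> mono_aut M" "Q \<in> mono_aut M" by (auto simp: mono_aut_f_def)
  then have B: "monomial_perm P \<in> Bij UNIV" "monomial_perm Q \<in> Bij UNIV" by (simp_all add: aut_perm_bij)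
  have mm: "monomial_mat P" "monomial_mat Q" using PQ by (auto simp: mono_aut_def)
  show "monomial_perm (P \<otimes>\<^bsub>mat_group (mono_aut_f M)\<^esub> Q) =
      monomial_perm P \<otimes>\<^bsub>perm_group (monomial_perm ` mono_aut M)\<^esub> monomial_perm Q"
    by (simp add: pg_mult[OF B] monomial_mult[OF mm])
qed

lemma autf_onto:
  assumes H: "complex_hadamard M"
  shows "monomial_perm ` mono_aut_f M = monomial_perm ` (mono_aut M :: (complex^'n::finite^'n) set)"
proof
  show "monomial_perm ` mono_aut_f M \<subseteq> monomial_perm ` mono_aut M" by (auto simp: mono_aut_f_def)
  show "monomial_perm ` mono_aut M \<subseteq> monomial_perm ` mono_aut_f M"
  proof
    fix \<sigma> assume "\<sigma> \<in> monomial_perm ` mono_aut M"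
    then obtain P where P: "P \<in> mono_aut M" and \<sigma>: "\<sigma> = monomial_perm P" by auto
    have m: "monomial_mat P" "P ** M ** cnj_transpose P = M" using P by (auto simp: mono_aut_def)
    define d where "d = det P"
    have dd: "d * cnj d = 1" using aut_det[OF H P] by (simp add: d_def)
    then have d0: "d \<noteq> 0" by auto
    have "of_real ((norm d)\<^sup>2) = (1::complex)" using dd complex_norm_square[of d] by simp
    then have "(norm d)\<^sup>2 = 1" by (metis of_real_eq_1_iff)
    then have nd: "norm d = 1" using norm_ge_zero[of d] by (auto simp: power2_eq_1_iff)
    define N where "N = CARD('n)"
    have N0: "N > 0" by (simp add: N_def)
    define c where "c = exp (- Ln d / of_nat N)"
    have cN: "c ^ N = inverse d"
    proof -
      have "c ^ N = exp (of_nat N * (- Ln d / of_nat N))" unfolding c_def by (rule exp_of_nat_mult[symmetric])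
      also have "of_nat N * (- Ln d / of_nat N) = - Ln d" using N0 by simp
      also have "exp (- Ln d) = inverse d" using d0 by (simp add: exp_minus)
      finally show ?thesis .
    qed
    have nc: "norm c = 1" using d0 nd by (simp add: c_def)
    have cc: "c * cnj c = 1"
    proof -
      have "c * cnj c = of_real ((norm c)\<^sup>2)" by (rule complex_norm_square[symmetric])
      then show ?thesis using nc by simp
    qed
    then have c0: "c \<noteq> 0" by auto
    define Q where "Q = mat c ** P"
    have Qe: "Q $ a $ b = c * P $ a $ b" for a b by (simp add: Q_def mat_mult_left)
    have Qnz: "Q $ a $ b \<noteq> 0 \<longleftrightarrow> a = monomial_perm P b" for a b
      using monomial_perm_iff[OF m(1)] c0 by (simp add: Qe)
    have Qm: "monomial_mat Q" "monomial_perm Q = monomial_perm P"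
      using monomial_by_perm[OF monomial_perm_bij[OF m(1)] Qnz] by auto
    have "Q ** M ** cnj_transpose Q = mat c ** (P ** M ** cnj_transpose P) ** mat (cnj c)"
      by (simp add: Q_def ct_mult matrix_mul_assoc)
    also have "\<dots> = M" using cc
      by (simp add: m(2) mat_mult_left mat_mult_right vec_eq_iff mult.commute mult.left_commute)
    finally have QM: "Q ** M ** cnj_transpose Q = M" .
    have "det Q = c ^ N * d" by (simp add: Q_def det_mul det_mat d_def N_def)
    then have "det Q = 1" using cN d0 by simp
    then have "Q \<in> mono_aut_f M" using Qm QM by (simp add: mono_aut_f_def mono_aut_def)
    then show "\<sigma> \<in> monomial_perm ` mono_aut_f M" using Qm(2) \<sigma> by (metis image_eqI)
  qed
qed

lemma autf_kernel_center:
  assumes H: "complex_hadamard M"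
  shows "kernel (mat_group (mono_aut_f M)) (perm_group (monomial_perm ` mono_aut M)) monomial_perm
         \<subseteq> group_center (mat_group (mono_aut_f M))"
proof
  fix P assume "P \<in> kernel (mat_group (mono_aut_f M)) (perm_group (monomial_perm ` mono_aut M)) monomial_perm"
  then have P: "P \<in> mono_aut_f M" "monomial_perm P = id" by (auto simp: kernel_def pg_one)
  then have "P = mat (P $ i $ i)" for i using aut_kernel[OF H] by (auto simp: mono_aut_f_def)
  then have "P ** L = L ** P" for L by (metis mat_comm)
  then show "P \<in> group_center (mat_group (mono_aut_f M))" using P by (simp add: group_center_def)
qed

lemma autf_finite:
  assumes H: "complex_hadamard M"
  shows "finite (mono_aut_f (M :: complex^'n::finite^'n))"
proof -
  define rep where "rep = (\<lambda>\<sigma>. SOME L. L \<in> mono_aut_f M \<and> monomial_perm L = \<sigma>)"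
  define R where "R = rep ` (monomial_perm ` mono_aut_f M)"
  define U where "U = {c::complex. c ^ CARD('n) = 1}"
  have finR: "finite R" unfolding R_def by simp
  have finU: "finite U" unfolding U_def by (rule finite_roots_unity) simp
  have "mono_aut_f M \<subseteq> (\<lambda>(c, L0). mat c ** L0) ` (U \<times> R)"
  proof
    fix L assume L: "L \<in> mono_aut_f M"
    define L0 where "L0 = rep (monomial_perm L)"
    have "\<exists>L'. L' \<in> mono_aut_f M \<and> monomial_perm L' = monomial_perm L" using L by blast
    then have "L0 \<in> mono_aut_f M \<and> monomial_perm L0 = monomial_perm L"
      unfolding L0_def rep_def by (rule someI_ex)
    then have L0: "L0 \<in> mono_aut_f M" "monomial_perm L0 = monomial_perm L" by auto
    have LG: "L \<in> mono_aut M" "L0 \<in> mono_aut M" using L L0 by (auto simp: mono_aut_f_def)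
    define X where "X = L ** cnj_transpose L0"
    have XA: "X \<in> mono_aut_f M" unfolding X_def using L autf_inv[OF H L0(1)] by (rule autf_mult)
    have "monomial_perm X = monomial_perm (L0 ** cnj_transpose L0)"
      using LG aut_inv[OF H] L0(2) by (simp add: X_def monomial_mult mono_aut_def)
    then have "monomial_perm X = id" using aut_unitary(1)[OF H LG(2)] monomial_mat1 by simp
    then have Xc: "X = mat (X $ i $ i)" for i using aut_kernel[OF H] XA by (auto simp: mono_aut_f_def)
    obtain i :: 'n where True by simp
    define c where "c = X $ i $ i"
    have "det X = 1" using XA by (simp add: mono_aut_f_def)
    moreover have "det (mat c :: complex^'n^'n) = c ^ CARD('n)" by (rule det_mat)
    ultimately have cU: "c \<in> U" using Xc[of i] by (simp add: U_def c_def)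
    have "X ** L0 = L" using aut_unitary(2)[OF H LG(2)] by (simp add: X_def matrix_mul_assoc[symmetric])
    then have "L = mat c ** L0" using Xc[of i] by (simp add: c_def)
    moreover have "L0 \<in> R" using L by (simp add: R_def L0_def)
    ultimately show "L \<in> (\<lambda>(c, L0). mat c ** L0) ` (U \<times> R)" using cU by force
  qed
  moreover have "finite ((\<lambda>(c, L0). mat c ** L0) ` (U \<times> R))" using finU finR by simp
  ultimately show ?thesis by (rule finite_subset)
qed

lemma (in group) center_inv:
  assumes "z \<in> group_center G" shows "inv z \<in> group_center G"
proof -
  have zc: "z \<in> carrier G" and zg: "\<And>g. g \<in> carrier G \<Longrightarrow> z \<otimes> g = g \<otimes> z"
    using assms by (auto simp: group_center_def)
  have "inv z \<otimes> g = g \<otimes> inv z" if g: "g \<in> carrier G" for g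
  proof -
    have "g \<otimes> inv z = inv z \<otimes> (z \<otimes> g) \<otimes> inv z"
      using zc g by (simp add: m_assoc[symmetric])
    also have "\<dots> = inv z \<otimes> (g \<otimes> z) \<otimes> inv z" using zg[OF g] by simp
    also have "\<dots> = inv z \<otimes> g" using zc g by (simp add: m_assoc)
    finally show ?thesis by simp
  qed
  then show ?thesis using zc by (auto simp: group_center_def)
qed

lemma (in group) center_mult:
  assumes "z \<in> group_center G" "w \<in> group_center G" shows "z \<otimes> w \<in> group_center G"
proof -
  have zc: "z \<in> carrier G" and zg: "\<And>g. g \<in> carrier G \<Longrightarrow> z \<otimes> g = g \<otimes> z"
   and wc: "w \<in> carrier G" and wg: "\<And>g. g \<in> carrier G \<Longrightarrow> w \<otimes> g = g \<otimes> w"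
    using assms by (auto simp: group_center_def)
  have "z \<otimes> w \<otimes> g = g \<otimes> (z \<otimes> w)" if g: "g \<in> carrier G" for g
  proof -
    have "z \<otimes> w \<otimes> g = z \<otimes> (g \<otimes> w)" using zc wc g wg[OF g] by (simp add: m_assoc)
    also have "\<dots> = (z \<otimes> g) \<otimes> w" using zc wc g by (simp add: m_assoc)
    also have "\<dots> = g \<otimes> (z \<otimes> w)" using zc wc g zg[OF g] by (simp add: m_assoc)
    finally show ?thesis .
  qed
  then show ?thesis using zc wc by (auto simp: group_center_def)
qed

lemma (in group) swap4:
  assumes "p \<in> carrier G" "q \<in> carrier G" "v \<in> carrier G" "u \<in> group_center G"
  shows "(p \<otimes> u) \<otimes> (q \<otimes> v) = (p \<otimes> q) \<otimes> (u \<otimes> v)"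
proof -
  have u: "u \<in> carrier G" "u \<otimes> q = q \<otimes> u" using assms by (auto simp: group_center_def)
  have "(p \<otimes> u) \<otimes> (q \<otimes> v) = p \<otimes> ((u \<otimes> q) \<otimes> v)" using assms u(1) by (simp add: m_assoc)
  also have "\<dots> = p \<otimes> ((q \<otimes> u) \<otimes> v)" using u(2) by simp
  also have "\<dots> = (p \<otimes> q) \<otimes> (u \<otimes> v)" using assms u(1) by (simp add: m_assoc)
  finally show ?thesis .
qed

lemma (in group) center_carrier: "z \<in> group_center G \<Longrightarrow> z \<in> carrier G"
  by (simp add: group_center_def)

lemma (in group) comm_center:
  assumes a: "a \<in> carrier G" and b: "b \<in> carrier G"
    and z: "z \<in> group_center G" and w: "w \<in> group_center G"
  shows "(a \<otimes> z) \<otimes> (b \<otimes> w) \<otimes> inv (a \<otimes> z) \<otimes> inv (b \<otimes> w) = a \<otimes> b \<otimes> inv a \<otimes> inv b"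
proof -
  have zc: "z \<in> carrier G" and wc: "w \<in> carrier G" using z w center_carrier by auto
  have iz: "inv z \<in> group_center G" and iw: "inv w \<in> group_center G" using z w center_inv by auto
  have zw: "z \<otimes> w \<in> group_center G" and izw: "inv z \<otimes> inv w \<in> group_center G"
    using center_mult z w iz iw by auto
  have "inv z \<otimes> inv a = inv a \<otimes> inv z" using iz a by (simp add: group_center_def)
  then have i1: "inv (a \<otimes> z) = inv a \<otimes> inv z"
    using a zc by (simp add: inv_mult_group)
  have "inv w \<otimes> inv b = inv b \<otimes> inv w" using iw b by (simp add: group_center_def)
  then have i2: "inv (b \<otimes> w) = inv b \<otimes> inv w"
    using b wc by (simp add: inv_mult_group)
  have "(a \<otimes> z) \<otimes> (b \<otimes> w) \<otimes> inv (a \<otimes> z) \<otimes> inv (b \<otimes> w)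
      = ((a \<otimes> z) \<otimes> (b \<otimes> w)) \<otimes> ((inv a \<otimes> inv z) \<otimes> (inv b \<otimes> inv w))"
    using a b zc wc i1 i2 by (simp add: m_assoc)
  also have "\<dots> = ((a \<otimes> b) \<otimes> (z \<otimes> w)) \<otimes> ((inv a \<otimes> inv b) \<otimes> (inv z \<otimes> inv w))"
    using a b zc wc z iz by (simp add: swap4)
  also have "\<dots> = ((a \<otimes> b) \<otimes> (inv a \<otimes> inv b)) \<otimes> ((z \<otimes> w) \<otimes> (inv z \<otimes> inv w))"
    using a b zc wc zw izw by (intro swap4) (auto simp: center_carrier)
  also have "(z \<otimes> w) \<otimes> (inv z \<otimes> inv w) = \<one>"
  proof -
    have "(z \<otimes> w) \<otimes> (inv z \<otimes> inv w) = (z \<otimes> inv z) \<otimes> (w \<otimes> inv w)"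
      using zc wc w by (intro swap4) auto
    then show ?thesis using zc wc by simp
  qed
  finally show ?thesis using a b by (simp add: m_assoc)
qed

lemma central_ext:
  assumes gE: "group E" and gG: "group G" and hom: "\<phi> \<in> hom E G" and onto: "\<phi> ` carrier E = carrier G"
    and perf: "derived G (carrier G) = carrier G"
    and cen: "kernel E G \<phi> \<subseteq> group_center E"
  shows "\<phi> ` derived E (carrier E) = carrier G"
    and "\<And>x. x \<in> carrier E \<Longrightarrow> \<exists>a\<in>derived E (carrier E). \<exists>z\<in>kernel E G \<phi>. x = a \<otimes>\<^bsub>E\<^esub> z"
    and "derived E (derived E (carrier E)) = derived E (carrier E)"
proof -
  interpret E: group E by fact
  interpret gh: group_hom E G \<phi> using gE gG hom by (simp add: group_hom_def group_hom_axioms_def)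
  show im: "\<phi> ` derived E (carrier E) = carrier G"
    using gh.derived_img[of "carrier E"] onto perf by simp
  have dc: "derived E (carrier E) \<subseteq> carrier E" by (simp add: E.derived_in_carrier)
  show dec: "\<exists>a\<in>derived E (carrier E). \<exists>z\<in>kernel E G \<phi>. x = a \<otimes>\<^bsub>E\<^esub> z" if x: "x \<in> carrier E" for x
  proof -
    have "\<phi> x \<in> \<phi> ` derived E (carrier E)" using im x by auto
    then obtain a where a: "a \<in> derived E (carrier E)" "\<phi> a = \<phi> x" by auto
    have ac: "a \<in> carrier E" using a dc by auto
    have "\<phi> (inv\<^bsub>E\<^esub> a \<otimes>\<^bsub>E\<^esub> x) = \<one>\<^bsub>G\<^esub>" using ac x a by simp
    then have "inv\<^bsub>E\<^esub> a \<otimes>\<^bsub>E\<^esub> x \<in> kernel E G \<phi>" using ac x by (simp add: kernel_def)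
    moreover have "x = a \<otimes>\<^bsub>E\<^esub> (inv\<^bsub>E\<^esub> a \<otimes>\<^bsub>E\<^esub> x)" using ac x by (simp add: E.m_assoc[symmetric])
    ultimately show ?thesis using a by blast
  qed
  show "derived E (derived E (carrier E)) = derived E (carrier E)"
  proof
    show "derived E (derived E (carrier E)) \<subseteq> derived E (carrier E)"
      using E.mono_derived[OF dc] .
    have "derived_set E (carrier E) \<subseteq> derived_set E (derived E (carrier E))"
    proof
      fix c assume "c \<in> derived_set E (carrier E)"
      then obtain x y where xy: "x \<in> carrier E" "y \<in> carrier E"
        and c: "c = x \<otimes>\<^bsub>E\<^esub> y \<otimes>\<^bsub>E\<^esub> inv\<^bsub>E\<^esub> x \<otimes>\<^bsub>E\<^esub> inv\<^bsub>E\<^esub> y" by blast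
      obtain a z where az: "a \<in> derived E (carrier E)" "z \<in> kernel E G \<phi>" "x = a \<otimes>\<^bsub>E\<^esub> z"
        using dec[OF xy(1)] by blast
      obtain b w where bw: "b \<in> derived E (carrier E)" "w \<in> kernel E G \<phi>" "y = b \<otimes>\<^bsub>E\<^esub> w"
        using dec[OF xy(2)] by blast
      have "c = a \<otimes>\<^bsub>E\<^esub> b \<otimes>\<^bsub>E\<^esub> inv\<^bsub>E\<^esub> a \<otimes>\<^bsub>E\<^esub> inv\<^bsub>E\<^esub> b"
        unfolding c az(3) bw(3) using az bw dc cen by (intro E.comm_center) auto
      then show "c \<in> derived_set E (derived E (carrier E))" using az bw by blast
    qed
    then have "generate E (derived_set E (carrier E)) \<subseteq> generate E (derived_set E (derived E (carrier E)))"
      by (rule E.mono_generate)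
    then show "derived E (carrier E) \<subseteq> derived E (derived E (carrier E))"
      by (simp only: derived_def)
  qed
qed

lemma stem_to_nat:
  assumes st: "stem_extension E \<phi> G" and fin: "finite (carrier E)"
  shows "\<exists>(K::nat monoid) \<psi>. stem_extension K \<psi> G \<and> card (carrier K) = card (carrier E)"
proof -
  interpret E: group E using st by (simp add: stem_extension_def)
  have gG: "group G" and hom: "\<phi> \<in> hom E G" and onto: "\<phi> ` carrier E = carrier G"
    and ker: "kernel E G \<phi> \<subseteq> group_center E \<inter> derived E (carrier E)"
    using st by (auto simp: stem_extension_def)
  obtain f :: "_ \<Rightarrow> nat" where f: "inj_on f (carrier E)" using finite_imp_inj_to_nat_seg[OF fin] by blast
  define h where "h = inv_into (carrier E) f"
  have hf [simp]: "\<And>x. x \<in> carrier E \<Longrightarrow> h (f x) = x" using f by (simp add: h_def)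
  define K :: "nat monoid" where
    "K = \<lparr>carrier = f ` carrier E, mult = (\<lambda>x y. f (h x \<otimes>\<^bsub>E\<^esub> h y)), one = f \<one>\<^bsub>E\<^esub>\<rparr>"
  have Kc [simp]: "carrier K = f ` carrier E" and Km: "\<And>x y. x \<otimes>\<^bsub>K\<^esub> y = f (h x \<otimes>\<^bsub>E\<^esub> h y)"
    and Ko: "\<one>\<^bsub>K\<^esub> = f \<one>\<^bsub>E\<^esub>" by (simp_all add: K_def)
  have fm: "\<And>x y. x \<in> carrier E \<Longrightarrow> y \<in> carrier E \<Longrightarrow> f x \<otimes>\<^bsub>K\<^esub> f y = f (x \<otimes>\<^bsub>E\<^esub> y)"
    by (simp add: Km)
  have gK: "group K"
  proof (rule groupI)
    show "x \<otimes>\<^bsub>K\<^esub> y \<in> carrier K" if "x \<in> carrier K" "y \<in> carrier K" for x y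
      using that by (auto simp: fm)
    show "\<one>\<^bsub>K\<^esub> \<in> carrier K" by (simp add: Ko)
    show "x \<otimes>\<^bsub>K\<^esub> y \<otimes>\<^bsub>K\<^esub> z = x \<otimes>\<^bsub>K\<^esub> (y \<otimes>\<^bsub>K\<^esub> z)"
      if "x \<in> carrier K" "y \<in> carrier K" "z \<in> carrier K" for x y z
      using that by (auto simp: fm E.m_assoc)
    show "\<one>\<^bsub>K\<^esub> \<otimes>\<^bsub>K\<^esub> x = x" if "x \<in> carrier K" for x
      using that by (auto simp: fm Ko)
    show "\<exists>y\<in>carrier K. y \<otimes>\<^bsub>K\<^esub> x = \<one>\<^bsub>K\<^esub>" if xK: "x \<in> carrier K" for x
    proof -
      obtain u where u: "u \<in> carrier E" "x = f u" using xK by auto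
      show ?thesis using u by (intro bexI[of _ "f (inv\<^bsub>E\<^esub> u)"]) (auto simp: fm Ko)
    qed
  qed
  have fhom: "f \<in> hom E K"
    unfolding hom_def using fm by auto
  interpret fh: group_hom E K f using gK fhom E.is_group by (simp add: group_hom_def group_hom_axioms_def)
  define \<psi> where "\<psi> = (\<lambda>n. \<phi> (h n))"
  have \<psi>f: "\<And>x. x \<in> carrier E \<Longrightarrow> \<psi> (f x) = \<phi> x" by (simp add: \<psi>_def)
  have \<psi>hom: "\<psi> \<in> hom K G"
  proof (rule homI)
    fix x assume "x \<in> carrier K"
    then obtain u where u: "u \<in> carrier E" "x = f u" by auto
    show "\<psi> x \<in> carrier G" unfolding u(2) \<psi>f[OF u(1)] by (rule hom_in_carrier[OF hom u(1)])
  next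
    fix x y assume "x \<in> carrier K" "y \<in> carrier K"
    then obtain u v where u: "u \<in> carrier E" "x = f u" and v: "v \<in> carrier E" "y = f v" by auto
    show "\<psi> (x \<otimes>\<^bsub>K\<^esub> y) = \<psi> x \<otimes>\<^bsub>G\<^esub> \<psi> y"
      unfolding u(2) v(2) fm[OF u(1) v(1)] \<psi>f[OF u(1)] \<psi>f[OF v(1)] \<psi>f[OF E.m_closed[OF u(1) v(1)]]
      by (rule hom_mult[OF hom u(1) v(1)])
  qed
  have \<psi>onto: "\<psi> ` carrier K = carrier G"
  proof -
    have "\<psi> ` carrier K = (\<lambda>x. \<psi> (f x)) ` carrier E" by (simp add: image_image)
    also have "\<dots> = \<phi> ` carrier E" by (rule image_cong) (simp_all add: \<psi>f)
    finally show ?thesis using onto by simp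
  qed
  have dK: "derived K (carrier K) = f ` derived E (carrier E)"
    using fh.derived_img[of "carrier E"] by simp
  have kK: "kernel K G \<psi> = f ` kernel E G \<phi>"
  proof
    show "kernel K G \<psi> \<subseteq> f ` kernel E G \<phi>"
    proof
      fix x assume "x \<in> kernel K G \<psi>"
      then obtain u where u: "u \<in> carrier E" "x = f u" "\<psi> x = \<one>\<^bsub>G\<^esub>" by (auto simp: kernel_def)
      then have "u \<in> kernel E G \<phi>" using \<psi>f[OF u(1)] by (simp add: kernel_def)
      then show "x \<in> f ` kernel E G \<phi>" using u by blast
    qed
    show "f ` kernel E G \<phi> \<subseteq> kernel K G \<psi>"
      using \<psi>f by (auto simp: kernel_def)
  qed
  have cK: "f ` group_center E \<subseteq> group_center K"
  proof
    fix x assume "x \<in> f ` group_center E"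
    then obtain z where zc: "z \<in> carrier E" and zx: "x = f z"
      and zg: "\<And>g. g \<in> carrier E \<Longrightarrow> z \<otimes>\<^bsub>E\<^esub> g = g \<otimes>\<^bsub>E\<^esub> z"
      by (auto simp: group_center_def)
    have "x \<otimes>\<^bsub>K\<^esub> y = y \<otimes>\<^bsub>K\<^esub> x" if y: "y \<in> carrier K" for y
    proof -
      obtain u where u: "u \<in> carrier E" "y = f u" using y by auto
      show ?thesis unfolding zx u(2) fm[OF zc u(1)] fm[OF u(1) zc] zg[OF u(1)] ..
    qed
    then show "x \<in> group_center K" using zc zx by (auto simp: group_center_def)
  qed
  have "stem_extension K \<psi> G"
    unfolding stem_extension_def using gK gG \<psi>hom \<psi>onto kK dK cK ker by blast
  moreover have "card (carrier K) = card (carrier E)" using f by (simp add: card_image)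
  ultimately show ?thesis by blast
qed

lemma stem_perfect:
  assumes st: "stem_extension Gh proj G0" and perfG0: "derived G0 (carrier G0) = carrier G0"
  shows "derived Gh (carrier Gh) = carrier Gh"
proof -
  interpret Gh: group Gh using st by (simp add: stem_extension_def)
  have gG0: "group G0" and hom: "proj \<in> hom Gh G0" and onto: "proj ` carrier Gh = carrier G0"
    and ker: "kernel Gh G0 proj \<subseteq> group_center Gh \<inter> derived Gh (carrier Gh)"
    using st by (auto simp: stem_extension_def)
  have sub: "subgroup (derived Gh (carrier Gh)) Gh" by (simp add: Gh.derived_is_subgroup)
  show ?thesis
  proof
    show "derived Gh (carrier Gh) \<subseteq> carrier Gh" by (simp add: Gh.derived_in_carrier)
    show "carrier Gh \<subseteq> derived Gh (carrier Gh)"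
    proof
      fix x assume x: "x \<in> carrier Gh"
      obtain a z where az: "a \<in> derived Gh (carrier Gh)" "z \<in> kernel Gh G0 proj" "x = a \<otimes>\<^bsub>Gh\<^esub> z"
        using central_ext(2)[OF Gh.is_group gG0 hom onto perfG0, of x] ker x by blast
      then show "x \<in> derived Gh (carrier Gh)" using ker subgroup.m_closed[OF sub] by auto
    qed
  qed
qed

lemma fibre_lift:
  fixes Gh :: "('g,'c) monoid_scheme" and Gam :: "('m,'d) monoid_scheme" and G0 :: "('p,'e) monoid_scheme"
  assumes sc: "schur_cover Gh proj G0"
    and gGam: "group Gam" and pihom: "\<pi> \<in> hom Gam G0" and pionto: "\<pi> ` carrier Gam = carrier G0"
    and picen: "kernel Gam G0 \<pi> \<subseteq> group_center Gam"
    and perfGam: "derived Gam (carrier Gam) = carrier Gam"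
    and perfG0: "derived G0 (carrier G0) = carrier G0"
    and finGam: "finite (carrier Gam)"
  shows "\<exists>\<theta>. \<theta> \<in> hom Gh Gam \<and> \<theta> ` carrier Gh = carrier Gam \<and> (\<forall>g\<in>carrier Gh. \<pi> (\<theta> g) = proj g)"
proof -
  have st: "stem_extension Gh proj G0" and finGh: "finite (carrier Gh)"
    and maxc: "\<And>(K :: nat monoid) \<psi>. stem_extension K \<psi> G0 \<Longrightarrow> card (carrier K) \<le> card (carrier Gh)"
    using sc by (auto simp: schur_cover_def)
  interpret Gh: group Gh using st by (simp add: stem_extension_def)
  interpret Gam: group Gam by fact
  have gG0: "group G0" and hom: "proj \<in> hom Gh G0" and onto: "proj ` carrier Gh = carrier G0"
    and ker: "kernel Gh G0 proj \<subseteq> group_center Gh \<inter> derived Gh (carrier Gh)"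
    using st by (auto simp: stem_extension_def)
  interpret G0: group G0 by fact
  interpret ph: group_hom Gh G0 proj using hom by (simp add: group_hom_def group_hom_axioms_def Gh.is_group gG0)
  interpret pih: group_hom Gam G0 \<pi> using pihom by (simp add: group_hom_def group_hom_axioms_def gGam gG0)
  have perfGh: "derived Gh (carrier Gh) = carrier Gh" by (rule stem_perfect[OF st perfG0])
  define P where "P = Gh \<times>\<times> Gam"
  have gP: "group P" unfolding P_def by (rule DirProd_group) (simp_all add: Gh.is_group gGam)
  interpret P: group P by (rule gP)
  define F where "F = {p \<in> carrier Gh \<times> carrier Gam. proj (fst p) = \<pi> (snd p)}"
  have Fsub: "subgroup F P"
  proof (rule P.subgroupI)
    show "F \<subseteq> carrier P" by (auto simp: F_def P_def)
    show "F \<noteq> {}" by (auto simp: F_def intro!: exI[of _ "\<one>\<^bsub>Gh\<^esub>"] exI[of _ "\<one>\<^bsub>Gam\<^esub>"])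
    show "inv\<^bsub>P\<^esub> a \<in> F" if "a \<in> F" for a
      using that by (auto simp: F_def P_def Gh.is_group gGam)
    show "a \<otimes>\<^bsub>P\<^esub> b \<in> F" if "a \<in> F" "b \<in> F" for a b
      using that by (auto simp: F_def P_def)
  qed
  define E where "E = P\<lparr>carrier := F\<rparr>"
  have gE: "group E" unfolding E_def by (rule subgroup.subgroup_is_group[OF Fsub gP])
  interpret E: group E by (rule gE)
  have Ec [simp]: "carrier E = F" and Em [simp]: "\<And>x y. x \<otimes>\<^bsub>E\<^esub> y = x \<otimes>\<^bsub>P\<^esub> y"
    by (simp_all add: E_def)
  have Pm: "\<And>a b c d. (a, b) \<otimes>\<^bsub>P\<^esub> (c, d) = (a \<otimes>\<^bsub>Gh\<^esub> c, b \<otimes>\<^bsub>Gam\<^esub> d)"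
    by (simp add: P_def)
  have liftGh: "\<exists>L\<in>carrier Gam. \<pi> L = proj g" if "g \<in> carrier Gh" for g
    using that onto pionto by (metis imageI image_iff)
  have liftGam: "\<exists>g\<in>carrier Gh. proj g = \<pi> L" if "L \<in> carrier Gam" for L
    using that onto pionto by (metis imageI image_iff)
  define \<kappa> where "\<kappa> = (\<lambda>p :: 'g \<times> 'm. proj (fst p))"
  have \<kappa>hom: "\<kappa> \<in> hom E G0"
    by (rule homI) (auto simp: \<kappa>_def F_def Pm)
  have fsthom: "fst \<in> hom E Gh"
    by (rule homI) (auto simp: F_def Pm)
  have sndhom: "snd \<in> hom E Gam"
    by (rule homI) (auto simp: F_def Pm)
  have fstE: "fst ` carrier E = carrier Gh"
  proof
    show "fst ` carrier E \<subseteq> carrier Gh" by (auto simp: F_def)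
    show "carrier Gh \<subseteq> fst ` carrier E"
    proof
      fix g assume g: "g \<in> carrier Gh"
      then obtain L where "L \<in> carrier Gam" "\<pi> L = proj g" using liftGh by blast
      then have "(g, L) \<in> carrier E" using g by (simp add: F_def)
      then show "g \<in> fst ` carrier E" by force
    qed
  qed
  have sndE: "snd ` carrier E = carrier Gam"
  proof
    show "snd ` carrier E \<subseteq> carrier Gam" by (auto simp: F_def)
    show "carrier Gam \<subseteq> snd ` carrier E"
    proof
      fix L assume L: "L \<in> carrier Gam"
      then obtain g where "g \<in> carrier Gh" "proj g = \<pi> L" using liftGam by blast
      then have "(g, L) \<in> carrier E" using L by (simp add: F_def)
      then show "L \<in> snd ` carrier E" by force
    qed
  qed
  have \<kappa>onto: "\<kappa> ` carrier E = carrier G0"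
    using fstE onto by (simp add: \<kappa>_def image_image[symmetric, of proj fst])
  have kerE: "kernel E G0 \<kappa> \<subseteq> group_center E"
  proof
    fix x assume x: "x \<in> kernel E G0 \<kappa>"
    obtain g L where gL: "x = (g, L)" by (cases x)
    have g: "g \<in> carrier Gh" "proj g = \<one>\<^bsub>G0\<^esub>" and L: "L \<in> carrier Gam" "\<pi> L = \<one>\<^bsub>G0\<^esub>"
      using x by (auto simp: kernel_def \<kappa>_def F_def gL)
    have gc: "g \<in> group_center Gh" using ker g by (auto simp: kernel_def)
    have Lc: "L \<in> group_center Gam" using picen L by (auto simp: kernel_def)
    have "x \<otimes>\<^bsub>E\<^esub> y = y \<otimes>\<^bsub>E\<^esub> x" if y: "y \<in> carrier E" for y
    proof -
      obtain g' L' where y': "y = (g', L')" by (cases y)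
      have "g' \<in> carrier Gh" "L' \<in> carrier Gam" using y by (auto simp: F_def y')
      then have "g \<otimes>\<^bsub>Gh\<^esub> g' = g' \<otimes>\<^bsub>Gh\<^esub> g" "L \<otimes>\<^bsub>Gam\<^esub> L' = L' \<otimes>\<^bsub>Gam\<^esub> L"
        using gc Lc by (auto simp: group_center_def)
      then show ?thesis by (simp add: gL y' Pm)
    qed
    then show "x \<in> group_center E" using x by (auto simp: group_center_def kernel_def)
  qed
  define D where "D = derived E (carrier E)"
  have DE: "D \<subseteq> carrier E" unfolding D_def by (rule E.derived_in_carrier) (rule subset_refl)
  have Dsub: "subgroup D E" unfolding D_def by (rule E.derived_is_subgroup) (rule subset_refl)
  have perfD: "derived E D = D"
    using central_ext(3)[OF gE gG0 \<kappa>hom \<kappa>onto perfG0 kerE] by (simp add: D_def)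
  interpret fh: group_hom E Gh fst using fsthom by (simp add: group_hom_def group_hom_axioms_def gE Gh.is_group)
  interpret sh: group_hom E Gam snd using sndhom by (simp add: group_hom_def group_hom_axioms_def gE gGam)
  have fstD: "fst ` D = carrier Gh"
    using fh.derived_img[of "carrier E"] fstE perfGh by (simp add: D_def)
  have sndD: "snd ` D = carrier Gam"
    using sh.derived_img[of "carrier E"] sndE perfGam by (simp add: D_def)
  define K0 where "K0 = E\<lparr>carrier := D\<rparr>"
  have gK0: "group K0" unfolding K0_def by (rule subgroup.subgroup_is_group[OF Dsub gE])
  have K0c [simp]: "carrier K0 = D" and K0m [simp]: "\<And>x y. x \<otimes>\<^bsub>K0\<^esub> y = x \<otimes>\<^bsub>E\<^esub> y"
    by (simp_all add: K0_def)
  have stK0: "stem_extension K0 \<kappa> G0"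
    unfolding stem_extension_def
  proof (intro conjI)
    show "group K0" by (rule gK0)
    show "group G0" by (rule gG0)
    show "\<kappa> \<in> hom K0 G0"
      using \<kappa>hom DE by (auto simp: hom_def)
    show "\<kappa> ` carrier K0 = carrier G0"
      using fstD onto by (simp add: \<kappa>_def image_image[symmetric, of proj fst])
    have dK0: "derived K0 (carrier K0) = D"
      using E.derived_consistent[OF subset_refl Dsub] perfD by (simp add: K0_def)
    show "kernel K0 G0 \<kappa> \<subseteq> group_center K0 \<inter> derived K0 (carrier K0)"
    proof
      fix x assume x: "x \<in> kernel K0 G0 \<kappa>"
      then have xD: "x \<in> D" and xk: "x \<in> kernel E G0 \<kappa>" using DE by (auto simp: kernel_def)
      have xc: "x \<otimes>\<^bsub>E\<^esub> y = y \<otimes>\<^bsub>E\<^esub> x" if "y \<in> carrier E" for y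
        using kerE xk that unfolding group_center_def by blast
      have "x \<in> group_center K0" using xD xc DE by (auto simp: group_center_def)
      then show "x \<in> group_center K0 \<inter> derived K0 (carrier K0)" using dK0 xD by simp
    qed
  qed
  have finD: "finite D"
  proof (rule finite_subset[OF DE])
    show "finite (carrier E)" using finGh finGam by (auto simp: F_def intro: finite_subset[of _ "carrier Gh \<times> carrier Gam"])
  qed
  obtain K :: "nat monoid" and \<psi> where "stem_extension K \<psi> G0" "card (carrier K) = card D"
    using stem_to_nat[OF stK0] finD by auto
  then have cardD: "card D \<le> card (carrier Gh)" using maxc by fastforce
  have "card (fst ` D) = card D"
    using card_image_le[OF finD, of fst] cardD fstD by simp
  then have injD: "inj_on fst D" by (rule eq_card_imp_inj_on[OF finD])
  define \<theta> where "\<theta> = (\<lambda>g. snd (inv_into D fst g))"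
  have iD: "inv_into D fst g \<in> D" "fst (inv_into D fst g) = g" if "g \<in> carrier Gh" for g
    using that fstD by (auto intro: inv_into_into f_inv_into_f)
  have iF: "inv_into D fst g \<in> F" if "g \<in> carrier Gh" for g using iD[OF that] DE by auto
  have \<theta>hom: "\<theta> \<in> hom Gh Gam"
  proof (rule homI)
    fix g assume "g \<in> carrier Gh"
    then show "\<theta> g \<in> carrier Gam" using iF by (auto simp: \<theta>_def F_def)
  next
    fix g h assume g: "g \<in> carrier Gh" and h: "h \<in> carrier Gh"
    define p where "p = inv_into D fst g"
    define q where "q = inv_into D fst h"
    have pq: "p \<in> D" "q \<in> D" "fst p = g" "fst q = h" using iD g h by (auto simp: p_def q_def)
    have pqD: "p \<otimes>\<^bsub>E\<^esub> q \<in> D" using subgroup.m_closed[OF Dsub] pq by auto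
    obtain p1 p2 where p: "p = (p1, p2)" by (cases p)
    obtain q1 q2 where q: "q = (q1, q2)" by (cases q)
    have fpq: "fst (p \<otimes>\<^bsub>E\<^esub> q) = g \<otimes>\<^bsub>Gh\<^esub> h" using pq by (simp add: p q Pm)
    have "inv_into D fst (g \<otimes>\<^bsub>Gh\<^esub> h) = p \<otimes>\<^bsub>E\<^esub> q"
      using inv_into_f_f[OF injD pqD] fpq by simp
    then show "\<theta> (g \<otimes>\<^bsub>Gh\<^esub> h) = \<theta> g \<otimes>\<^bsub>Gam\<^esub> \<theta> h"
      by (simp add: \<theta>_def p_def[symmetric] q_def[symmetric] p q Pm)
  qed
  have \<theta>onto: "\<theta> ` carrier Gh = carrier Gam"
  proof
    show "\<theta> ` carrier Gh \<subseteq> carrier Gam" using \<theta>hom by (auto simp: hom_def)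
    show "carrier Gam \<subseteq> \<theta> ` carrier Gh"
    proof
      fix L assume L: "L \<in> carrier Gam"
      have "L \<in> snd ` D" using sndD L by simp
      then obtain x where x: "x \<in> D" "L = snd x" by (rule imageE) blast
      have "inv_into D fst (fst x) = x" using inv_into_f_f[OF injD x(1)] .
      then have "\<theta> (fst x) = L" using x by (simp add: \<theta>_def)
      moreover have "fst x \<in> carrier Gh" using x fstD by auto
      ultimately show "L \<in> \<theta> ` carrier Gh" by force
    qed
  qed
  have \<theta>proj: "\<pi> (\<theta> g) = proj g" if "g \<in> carrier Gh" for g
    using iF[OF that] iD(2)[OF that] by (auto simp: \<theta>_def F_def)
  show ?thesis using \<theta>hom \<theta>onto \<theta>proj by blast
qed

lemma coset_perm:
  assumes G: "group Gh" and a: "a \<in> carrier Gh" and g: "g \<in> carrier Gh" and b: "b \<in> carrier Gh"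
    and pm: "\<And>u v. u \<in> carrier Gh \<Longrightarrow> v \<in> carrier Gh \<Longrightarrow> pr (u \<otimes>\<^bsub>Gh\<^esub> v) = pr u \<circ> pr v"
    and ia: "inj (pr a)"
  shows "pr (inv\<^bsub>Gh\<^esub> a \<otimes>\<^bsub>Gh\<^esub> g \<otimes>\<^bsub>Gh\<^esub> b) i = i \<longleftrightarrow> pr g (pr b i) = pr a i"
proof -
  interpret group Gh by (rule G)
  define x where "x = inv\<^bsub>Gh\<^esub> a \<otimes>\<^bsub>Gh\<^esub> g \<otimes>\<^bsub>Gh\<^esub> b"
  have xc: "x \<in> carrier Gh" using a g b by (simp add: x_def)
  have x2: "x = inv\<^bsub>Gh\<^esub> a \<otimes>\<^bsub>Gh\<^esub> (g \<otimes>\<^bsub>Gh\<^esub> b)"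
    unfolding x_def using a g b by (intro m_assoc) simp_all
  have e: "g \<otimes>\<^bsub>Gh\<^esub> b = a \<otimes>\<^bsub>Gh\<^esub> x"
    using inv_solve_left[OF xc a m_closed[OF g b]] x2 by blast
  have "pr g (pr b i) = (pr g \<circ> pr b) i" by simp
  also have "\<dots> = pr (g \<otimes>\<^bsub>Gh\<^esub> b) i" by (simp only: pm[OF g b])
  also have "\<dots> = pr (a \<otimes>\<^bsub>Gh\<^esub> x) i" by (simp only: e)
  also have "\<dots> = pr a (pr x i)" by (simp only: pm[OF a xc] comp_apply)
  finally have A: "pr g (pr b i) = pr a (pr x i)" .
  have B: "pr x i = i \<longleftrightarrow> pr a (pr x i) = pr a i"
  proof
    assume "pr x i = i" then show "pr a (pr x i) = pr a i" by simp
  next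
    assume "pr a (pr x i) = pr a i" then show "pr x i = i" by (rule injD[OF ia])
  qed
  show ?thesis unfolding x_def[symmetric] A by (rule B)
qed


theorem proposition6p2:
  fixes M :: "complex^'n::finite^'n"
    and Ghat :: "('g, 'c) monoid_scheme"
    and proj :: "'g \<Rightarrow> ('n \<Rightarrow> 'n)"
    and i :: 'n
  defines "\<Gamma> \<equiv> mono_aut M"
    and "G \<equiv> monomial_perm ` mono_aut M"
    and "\<Gamma>f \<equiv> mono_aut_f M"
    and "H \<equiv> {\<sigma> \<in> monomial_perm ` mono_aut M. \<sigma> i = i}"
  assumes "complex_hadamard M"
    and "transitive_perms G"
    and "perfect_group (perm_group G)"
    and "perfect_group (mat_group \<Gamma>f)"
    and "schur_cover Ghat proj (perm_group G)"
  shows "\<exists>\<rho>. induced_from_linear_char Ghat {g \<in> carrier Ghat. proj g \<in> H} \<rho>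
              \<and> \<rho> ` carrier Ghat = \<Gamma>f"
proof -
  have Had: "complex_hadamard M" by fact
  have sc: "schur_cover Ghat proj (perm_group G)" by fact
  have st: "stem_extension Ghat proj (perm_group G)" using sc by (simp add: schur_cover_def)
  have "\<exists>\<theta>. \<theta> \<in> hom Ghat (mat_group \<Gamma>f) \<and> \<theta> ` carrier Ghat = carrier (mat_group \<Gamma>f)
      \<and> (\<forall>g\<in>carrier Ghat. monomial_perm (\<theta> g) = proj g)"
  proof (rule fibre_lift[OF sc])
    show "group (mat_group \<Gamma>f)" unfolding \<Gamma>f_def by (rule group_matf[OF Had])
    show "monomial_perm \<in> hom (mat_group \<Gamma>f) (perm_group G)" unfolding \<Gamma>f_def G_def by (rule perm_hom)
    show "monomial_perm ` carrier (mat_group \<Gamma>f) = carrier (perm_group G)"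
      unfolding \<Gamma>f_def G_def using autf_onto[OF Had] by simp
    show "kernel (mat_group \<Gamma>f) (perm_group G) monomial_perm \<subseteq> group_center (mat_group \<Gamma>f)"
      unfolding \<Gamma>f_def G_def by (rule autf_kernel_center[OF Had])
    show "derived (mat_group \<Gamma>f) (carrier (mat_group \<Gamma>f)) = carrier (mat_group \<Gamma>f)"
      using assms(8) by (simp add: perfect_group_def)
    show "derived (perm_group G) (carrier (perm_group G)) = carrier (perm_group G)"
      using assms(7) by (simp add: perfect_group_def)
    show "finite (carrier (mat_group \<Gamma>f))" unfolding \<Gamma>f_def using autf_finite[OF Had] by simp
  qed
  then obtain \<theta> where \<theta>hom: "\<theta> \<in> hom Ghat (mat_group \<Gamma>f)"
    and \<theta>onto: "\<theta> ` carrier Ghat = \<Gamma>f" and \<theta>perm: "\<And>g. g \<in> carrier Ghat \<Longrightarrow> monomial_perm (\<theta> g) = proj g"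
    by auto
  interpret Gh: group Ghat using st by (simp add: stem_extension_def)
  have phom: "proj \<in> hom Ghat (perm_group G)" and ponto: "proj ` carrier Ghat = G"
    using st by (auto simp: stem_extension_def)
  have gpg: "group (perm_group G)" using st by (simp add: stem_extension_def)
  interpret ph: group_hom Ghat "perm_group G" proj
    using phom gpg by (simp add: group_hom_def group_hom_axioms_def Gh.is_group)
  have p1: "proj \<one>\<^bsub>Ghat\<^esub> = id" using ph.hom_one pg_one by simp
  have pG: "proj g \<in> G" if "g \<in> carrier Ghat" for g using hom_in_carrier[OF phom that] by simp
  have pB: "proj g \<in> Bij UNIV" if "g \<in> carrier Ghat" for g
  proof -
    have "proj g \<in> monomial_perm ` mono_aut M" using pG[OF that] by (simp add: G_def)
    then obtain P where "P \<in> mono_aut M" "proj g = monomial_perm P" by blast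
    then show ?thesis using aut_perm_bij by simp
  qed
  have pinj: "inj (proj g)" if "g \<in> carrier Ghat" for g
    using pB[OF that] unfolding Bij_UNIV by (rule bij_is_inj)
  have pmul: "proj (g \<otimes>\<^bsub>Ghat\<^esub> h) = proj g \<circ> proj h" if g: "g \<in> carrier Ghat" and h: "h \<in> carrier Ghat" for g h
  proof -
    have "proj (g \<otimes>\<^bsub>Ghat\<^esub> h) = proj g \<otimes>\<^bsub>perm_group G\<^esub> proj h" by (rule hom_mult[OF phom g h])
    also have "\<dots> = proj g \<circ> proj h" by (rule pg_mult[OF pB[OF g] pB[OF h]])
    finally show ?thesis .
  qed
  have \<theta>c: "\<theta> g \<in> \<Gamma>f" if "g \<in> carrier Ghat" for g using hom_in_carrier[OF \<theta>hom that] by simp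
  have \<theta>mon: "monomial_mat (\<theta> g)" if "g \<in> carrier Ghat" for g
    using \<theta>c[OF that] unfolding \<Gamma>f_def mono_aut_f_def mono_aut_def by blast
  have \<theta>mul: "\<theta> (g \<otimes>\<^bsub>Ghat\<^esub> h) = \<theta> g ** \<theta> h" if "g \<in> carrier Ghat" "h \<in> carrier Ghat" for g h
    using hom_mult[OF \<theta>hom that] by simp
  have nz: "\<theta> g $ a $ b \<noteq> 0 \<longleftrightarrow> a = proj g b" if "g \<in> carrier Ghat" for g a b
    using monomial_perm_iff[OF \<theta>mon[OF that]] \<theta>perm[OF that] by simp
  define Hh where "Hh = {g \<in> carrier Ghat. proj g \<in> H}"
  have Hh_iff: "x \<in> Hh \<longleftrightarrow> x \<in> carrier Ghat \<and> proj x i = i" for x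
  proof -
    have "x \<in> carrier Ghat \<Longrightarrow> proj x \<in> monomial_perm ` mono_aut M" using pG[of x] by (simp add: G_def)
    then show ?thesis unfolding Hh_def H_def by blast
  qed
  have Y: "inv\<^bsub>Ghat\<^esub> a \<otimes>\<^bsub>Ghat\<^esub> g \<otimes>\<^bsub>Ghat\<^esub> b \<in> Hh \<longleftrightarrow> proj g (proj b i) = proj a i"
    if a: "a \<in> carrier Ghat" and g: "g \<in> carrier Ghat" and b: "b \<in> carrier Ghat" for a g b
  proof -
    have xc: "inv\<^bsub>Ghat\<^esub> a \<otimes>\<^bsub>Ghat\<^esub> g \<otimes>\<^bsub>Ghat\<^esub> b \<in> carrier Ghat" using a g b by simp
    show ?thesis unfolding Hh_iff using xc coset_perm[OF Gh.is_group a g b pmul pinj[OF a], of i] by simp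
  qed
  define chr where "chr = (\<lambda>h. \<theta> h $ i $ i)"
  have lin: "linear_character Ghat Hh chr"
    unfolding linear_character_def
  proof (intro conjI ballI)
    fix h assume "h \<in> Hh"
    then show "chr h \<noteq> 0" using nz Hh_iff by (simp add: chr_def)
  next
    fix h k assume h: "h \<in> Hh" and k: "k \<in> Hh"
    have hc: "h \<in> carrier Ghat" and kc: "k \<in> carrier Ghat" and ki: "proj k i = i"
      using h k Hh_iff by auto
    have "(\<theta> h ** \<theta> k) $ i $ i = \<theta> h $ i $ i * \<theta> k $ i $ i"
      by (rule mult_col) (use nz[OF kc] ki in auto)
    then show "chr (h \<otimes>\<^bsub>Ghat\<^esub> k) = chr h * chr k" using \<theta>mul[OF hc kc] by (simp add: chr_def)
  qed
  have exg: "\<forall>j. \<exists>g. g \<in> carrier Ghat \<and> proj g i = j"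
  proof
    fix j
    obtain \<sigma> where "\<sigma> \<in> G" "\<sigma> i = j" using assms(6) by (auto simp: transitive_perms_def)
    then show "\<exists>g. g \<in> carrier Ghat \<and> proj g i = j" using ponto by force
  qed
  obtain t where "\<forall>j. t j \<in> carrier Ghat \<and> proj (t j) i = j" using choice[OF exg] by blast
  then have t: "\<And>j. t j \<in> carrier Ghat" "\<And>j. proj (t j) i = j" by auto
  have lt: "left_transversal Ghat Hh t"
    unfolding left_transversal_def
  proof (intro conjI allI ballI)
    fix j show "t j \<in> carrier Ghat" by (rule t)
  next
    fix g assume g: "g \<in> carrier Ghat"
    have "inv\<^bsub>Ghat\<^esub> (t j) \<otimes>\<^bsub>Ghat\<^esub> g \<in> Hh \<longleftrightarrow> proj g i = j" for j
    proof -
      have e: "inv\<^bsub>Ghat\<^esub> (t j) \<otimes>\<^bsub>Ghat\<^esub> g \<otimes>\<^bsub>Ghat\<^esub> \<one>\<^bsub>Ghat\<^esub> = inv\<^bsub>Ghat\<^esub> (t j) \<otimes>\<^bsub>Ghat\<^esub> g"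
        using t(1)[of j] g by simp
      show ?thesis using Y[OF t(1) g Gh.one_closed, of j] unfolding e p1 t(2) by simp
    qed
    then show "\<exists>!j. inv\<^bsub>Ghat\<^esub> (t j) \<otimes>\<^bsub>Ghat\<^esub> g \<in> Hh" by auto
  qed
  define d where "d = (\<lambda>k. \<theta> (t k) $ k $ i)"
  have d0: "d k \<noteq> 0" for k using nz[OF t(1)] t(2) by (simp add: d_def)
  define S :: "complex^'n^'n" where "S = (\<chi> a b. if a = b then d a else 0)"
  define S' :: "complex^'n^'n" where "S' = (\<chi> a b. if a = b then inverse (d a) else 0)"
  have "(S ** S') $ a $ b = mat 1 $ a $ b" for a b
  proof -
    have "(S ** S') $ a $ b = S $ a $ a * S' $ a $ b" by (rule mult_row) (simp add: S_def split: if_splits)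
    also have "\<dots> = mat 1 $ a $ b"
    proof (cases "a = b")
      case True
      have "S $ a $ a = d a" "S' $ a $ b = inverse (d a)" using True by (simp_all add: S_def S'_def)
      then show ?thesis using True d0[of a] by (simp add: mat_def)
    next
      case False
      have "S' $ a $ b = 0" using False by (simp add: S'_def)
      then show ?thesis using False by (simp add: mat_def)
    qed
    finally show ?thesis .
  qed
  then have "S ** S' = mat 1" by (simp add: vec_eq_iff)
  then have invS: "invertible S" unfolding invertible_right_inverse by blast
  have intertw: "\<theta> g ** S = S ** induced_mat Ghat Hh chr t g" if g: "g \<in> carrier Ghat" for g
  proof -
    have "(\<theta> g ** S) $ a $ k = (S ** induced_mat Ghat Hh chr t g) $ a $ k" for a k
    proof -
      have L: "(\<theta> g ** S) $ a $ k = \<theta> g $ a $ k * d k"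
        by (subst mult_col[where c=k]) (simp_all add: S_def split: if_splits)
      define x where "x = inv\<^bsub>Ghat\<^esub> (t a) \<otimes>\<^bsub>Ghat\<^esub> g \<otimes>\<^bsub>Ghat\<^esub> t k"
      have R: "(S ** induced_mat Ghat Hh chr t g) $ a $ k = d a * (if x \<in> Hh then chr x else 0)"
        by (subst mult_row[where c=a]) (simp_all add: S_def induced_mat_def x_def Let_def split: if_splits)
      show ?thesis
      proof (cases "x \<in> Hh")
        case True
        have xc: "x \<in> carrier Ghat" and xi: "proj x i = i" using True Hh_iff by auto
        have "t a \<otimes>\<^bsub>Ghat\<^esub> x = g \<otimes>\<^bsub>Ghat\<^esub> t k"
          using t(1)[of a] t(1)[of k] g by (simp add: x_def Gh.m_assoc[symmetric])
        then have eq: "\<theta> (t a) ** \<theta> x = \<theta> g ** \<theta> (t k)"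
          using \<theta>mul[OF t(1)[of a] xc] \<theta>mul[OF g t(1)[of k]] by metis
        have "(\<theta> (t a) ** \<theta> x) $ a $ i = \<theta> (t a) $ a $ i * \<theta> x $ i $ i"
          by (rule mult_col) (use nz[OF xc] xi in auto)
        moreover have "(\<theta> g ** \<theta> (t k)) $ a $ i = \<theta> g $ a $ k * \<theta> (t k) $ k $ i"
          by (rule mult_col) (use nz[OF t(1)] t(2) in auto)
        ultimately have "d a * chr x = \<theta> g $ a $ k * d k"
          using eq by (simp add: d_def chr_def t(2))
        then show ?thesis using L R True by simp
      next
        case False
        then have "proj g k \<noteq> a" using Y[OF t(1) g t(1), of a k] t(2) by (simp add: x_def)
        then have "\<theta> g $ a $ k = 0" using nz[OF g, of a k] by metis
        then show ?thesis using L R False by simp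
      qed
    qed
    then show ?thesis by (simp add: vec_eq_iff)
  qed
  have IND: "induced_from_linear_char Ghat Hh \<theta>"
    unfolding induced_from_linear_char_def
  proof (intro conjI ballI)
    fix g assume g: "g \<in> carrier Ghat"
    have "\<theta> g \<in> mono_aut M" using \<theta>c[OF g] by (simp add: \<Gamma>f_def mono_aut_f_def)
    then have "\<theta> g ** cnj_transpose (\<theta> g) = mat 1" by (rule aut_unitary(1)[OF Had])
    then show "invertible (\<theta> g)" unfolding invertible_right_inverse by blast
  next
    fix g h assume "g \<in> carrier Ghat" "h \<in> carrier Ghat"
    then show "\<theta> (g \<otimes>\<^bsub>Ghat\<^esub> h) = \<theta> g ** \<theta> h" by (rule \<theta>mul)
  next
    have "linear_character Ghat Hh chr \<and> left_transversal Ghat Hh t \<and> invertible S \<and>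
        (\<forall>g\<in>carrier Ghat. \<theta> g ** S = S ** induced_mat Ghat Hh chr t g)"
      using lin lt invS intertw by simp
    then show "\<exists>chr (t :: 'n \<Rightarrow> 'g) (S :: complex^'n^'n). linear_character Ghat Hh chr \<and> left_transversal Ghat Hh t \<and> invertible S \<and>
        (\<forall>g\<in>carrier Ghat. \<theta> g ** S = S ** induced_mat Ghat Hh chr t g)"
      by blast
  qed
  have eqH: "{g \<in> carrier Ghat. proj g \<in> H} = Hh" by (simp add: Hh_def)
  show ?thesis unfolding eqH using IND \<theta>onto by blast
qed

end
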